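(* Let $\beta>0$, $N\ge1$. For $u\in H_0^1(\mathbb R_+)$ let $\widehat{\Pi}_{N, \beta}^{1,0} u\in\widehat P^0_{N,\beta}$ be defined by $$\bigl((u-\widehat{\Pi}_{N, \beta}^{1,0} u)', v'\bigr)+\frac{\beta^2}{4}\bigl(u-\widehat{\Pi}_{N, \beta}^{1,0} u , v\bigr)=0\qquad \forall v \in \widehat{P}_{N, \beta}^0.$$ Then for every $u\in H_0^1(\mathbb R_+)$, $$\bigl\|u-\widehat{\Pi}_{N, \beta}^{1,0} u\bigr\|_1 \le\Bigl(2+\frac{2}{\beta}\Bigr)\bigl\|u'-\widehat{\Pi}_{N-1}^\beta u'\bigr\|+(\beta+1)\bigl\|u-\widehat{\Pi}_{N-1}^\beta u\bigr\|.$$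
   Context: $(f,g)=\int_0^\infty f g\,dx$ and $\|\cdot\|$ is the $L^2(\mathbb R_+)$ norm; $\|\cdot\|_1$ is the $H^1(\mathbb R_+)$ norm; $H^1_0(\mathbb R_+)=\{u\in H^1(\mathbb R_+):u(0)=0\}$. $P_N$ is the space of polynomials of degree at most $N$, $\widehat P_N^{\beta,L}=\{e^{-\beta x/2}p(x):p\in P_N\}$, and $\widehat P^0_{N,\beta}=\{\phi\in\widehat P_N^{\beta,L}:\phi(0)=0\}$. $\widehat\Pi_{K}^\beta$ denotes the $L^2(\mathbb R_+)$-orthogonal projection onto $\widehat P_K^{\beta,L}$. *)

theory Defs
  imports "HOL-Analysis.Analysis" "HOL-Computational_Algebra.Polynomial"
begin

definition L2_Rplus :: "(real \<Rightarrow> real) \<Rightarrow> bool" where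
  "L2_Rplus f \<longleftrightarrow> set_borel_measurable lborel {0..} f \<and>
     set_integrable lborel {0..} (\<lambda>x. (f x)^2)"

definition l2inner :: "(real \<Rightarrow> real) \<Rightarrow> (real \<Rightarrow> real) \<Rightarrow> real" where
  "l2inner f g = (LINT x:{0..}|lborel. f x * g x)"

definition l2norm :: "(real \<Rightarrow> real) \<Rightarrow> real" where
  "l2norm f = sqrt (LINT x:{0..}|lborel. (f x)^2)"

definition h1norm :: "(real \<Rightarrow> real) \<Rightarrow> (real \<Rightarrow> real) \<Rightarrow> real" where
  "h1norm f df = sqrt ((l2norm f)^2 + (l2norm df)^2)"

text \<open>u belongs to H^1_0(R+) with derivative du: u, du in L2(R+), du locally integrable,
  and (the continuous representative of) u satisfies u(x) = int_0^x du, so in particular u(0) = 0.\<close>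
definition H10_Rplus :: "(real \<Rightarrow> real) \<Rightarrow> (real \<Rightarrow> real) \<Rightarrow> bool" where
  "H10_Rplus u du \<longleftrightarrow> L2_Rplus u \<and> L2_Rplus du \<and>
     (\<forall>x\<ge>0. set_integrable lborel {0..x} du \<and> u x = (LINT t:{0..x}|lborel. du t))"

definition Phat :: "real \<Rightarrow> nat \<Rightarrow> (real \<Rightarrow> real) set" where
  "Phat \<beta> K = {f. \<exists>p :: real poly. degree p \<le> K \<and> f = (\<lambda>x. exp (- \<beta> * x / 2) * poly p x)}"

definition P0hat :: "real \<Rightarrow> nat \<Rightarrow> (real \<Rightarrow> real) set" where
  "P0hat \<beta> N = {f \<in> Phat \<beta> N. f 0 = 0}"

definition hproj :: "real \<Rightarrow> nat \<Rightarrow> (real \<Rightarrow> real) \<Rightarrow> (real \<Rightarrow> real)" where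
  "hproj \<beta> K f = (THE g. g \<in> Phat \<beta> K \<and> (\<forall>v\<in>Phat \<beta> K. l2inner (\<lambda>x. f x - g x) v = 0))"

end

theory Submission
  imports Defs "HOL-Probability.Distributions"
begin

lemma int_pow_exp1: "integrable lborel (\<lambda>x::real. x^k * exp (-x) * indicator {0..} x)"
proof (rule integrableI_nn_integral_finite)
  show "(\<integral>\<^sup>+x. ennreal (x^k * exp (-x) * indicator {0..} x) \<partial>lborel) = ennreal (fact k)"
    using nn_intergal_power_times_exp_Ici[of k]
    by (subst nn_integral_cong[where v="\<lambda>x. ennreal (x^k * exp (-x)) * indicator {0 ..} x"])
       (auto split: split_indicator)
qed (auto split: split_indicator)

lemma int_pow_exp:
  assumes "b > 0"
  shows "set_integrable lborel {0..} (\<lambda>x::real. x^k * exp (-b*x))"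
proof -
  have "integrable lborel (\<lambda>x. (\<lambda>y::real. y^k * exp (-y) * indicator {0..} y) (0 + b * x))"
    by (rule lborel_integrable_real_affine[OF int_pow_exp1]) (use assms in auto)
  then have "integrable lborel (\<lambda>x. (1 / b^k) * ((b*x)^k * exp (-(b*x)) * indicator {0..} (b*x)))"
    by simp
  moreover have "(\<lambda>x. (1 / b^k) * ((b*x)^k * exp (-(b*x)) * indicator {0..} (b*x))) =
     (\<lambda>x. indicator {0..} x *\<^sub>R (x^k * exp (-b*x)))"
    using assms by (auto simp: fun_eq_iff power_mult_distrib zero_le_mult_iff split: split_indicator)
  ultimately show ?thesis unfolding set_integrable_def by simp
qed

lemma int_poly_exp:
  assumes "b > 0"
  shows "set_integrable lborel {0..} (\<lambda>x::real. exp (-b*x) * poly p x)"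
proof -
  have "set_integrable lborel {0..} (\<lambda>x::real. \<Sum>i\<le>degree p. coeff p i * (x^i * exp (-b*x)))"
    unfolding set_integrable_def scaleR_sum_right
  proof (rule Bochner_Integration.integrable_sum)
    fix i
    have "integrable lborel (\<lambda>x. coeff p i * (indicator {0..} x *\<^sub>R (x^i * exp (-b*x))))"
      using int_pow_exp[OF assms, of i] unfolding set_integrable_def by (rule integrable_mult_right)
    then show "integrable lborel (\<lambda>x. indicator {0..} x *\<^sub>R (coeff p i * (x^i * exp (-b*x))))"
      by (simp add: mult_ac)
  qed
  moreover have "(\<lambda>x::real. \<Sum>i\<le>degree p. coeff p i * (x^i * exp (-b*x))) = (\<lambda>x. exp (-b*x) * poly p x)"
    by (auto simp: fun_eq_iff poly_altdef sum_distrib_left mult_ac)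
  ultimately show ?thesis by simp
qed

lemma L2_mult_int:
  assumes "L2_Rplus f" "L2_Rplus g"
  shows "set_integrable lborel {0..} (\<lambda>x. f x * g x)"
proof -
  have mf: "(\<lambda>x. indicator {0..} x *\<^sub>R f x) \<in> borel_measurable lborel"
   and mg: "(\<lambda>x. indicator {0..} x *\<^sub>R g x) \<in> borel_measurable lborel"
   and if2: "integrable lborel (\<lambda>x. indicator {0..} x *\<^sub>R (f x)^2)"
   and ig2: "integrable lborel (\<lambda>x. indicator {0..} x *\<^sub>R (g x)^2)"
    using assms unfolding L2_Rplus_def set_borel_measurable_def set_integrable_def by auto
  have "integrable lborel (\<lambda>x. indicator {0..} x *\<^sub>R (f x)^2 + indicator {0..} x *\<^sub>R (g x)^2)"
    using if2 ig2 by auto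
  moreover have "(\<lambda>x. indicator {0..} x *\<^sub>R (f x * g x)) \<in> borel_measurable lborel"
  proof -
    have "(\<lambda>x. (indicator {0..} x *\<^sub>R f x) * (indicator {0..} x *\<^sub>R g x)) \<in> borel_measurable lborel"
      using mf mg by measurable
    moreover have "(\<lambda>x. (indicator {0..} x *\<^sub>R f x) * (indicator {0..} x *\<^sub>R g x)) = (\<lambda>x. indicator {0..} x *\<^sub>R (f x * g x))"
      by (auto simp: fun_eq_iff split: split_indicator)
    ultimately show ?thesis by simp
  qed
  moreover have "AE x in lborel. norm (indicator {0..} x *\<^sub>R (f x * g x)) \<le>
        norm (indicator {0..} x *\<^sub>R (f x)^2 + indicator {0..} x *\<^sub>R (g x)^2)"
  proof (rule AE_I2)
    fix x
    have "(\<bar>f x\<bar> - \<bar>g x\<bar>)^2 \<ge> 0" by simp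
    then have "2 * \<bar>f x\<bar> * \<bar>g x\<bar> \<le> \<bar>f x\<bar>^2 + \<bar>g x\<bar>^2"
      unfolding power2_diff by linarith
    then have "2 * \<bar>f x\<bar> * \<bar>g x\<bar> \<le> (f x)^2 + (g x)^2" by simp
    moreover have "0 \<le> \<bar>f x\<bar> * \<bar>g x\<bar>" by simp
    ultimately have h: "\<bar>f x * g x\<bar> \<le> \<bar>(f x)^2 + (g x)^2\<bar>" unfolding abs_mult by linarith
    then show "norm (indicator {0..} x *\<^sub>R (f x * g x)) \<le>
        norm (indicator {0..} x *\<^sub>R (f x)^2 + indicator {0..} x *\<^sub>R (g x)^2)"
      by (auto split: split_indicator simp: abs_mult)
  qed
  ultimately show ?thesis unfolding set_integrable_def
    by (rule Bochner_Integration.integrable_bound)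
qed

lemma L2_lin:
  assumes "L2_Rplus f" "L2_Rplus g"
  shows "L2_Rplus (\<lambda>x. a * f x + b * g x)"
proof -
  have mf: "(\<lambda>x. indicator {0..} x *\<^sub>R f x) \<in> borel_measurable lborel"
   and mg: "(\<lambda>x. indicator {0..} x *\<^sub>R g x) \<in> borel_measurable lborel"
   and if2: "integrable lborel (\<lambda>x. indicator {0..} x *\<^sub>R (f x)^2)"
   and ig2: "integrable lborel (\<lambda>x. indicator {0..} x *\<^sub>R (g x)^2)"
    using assms unfolding L2_Rplus_def set_borel_measurable_def set_integrable_def by auto
  have m: "(\<lambda>x. indicator {0..} x *\<^sub>R (a * f x + b * g x)) \<in> borel_measurable lborel"
  proof -
    have "(\<lambda>x. a * (indicator {0..} x *\<^sub>R f x) + b * (indicator {0..} x *\<^sub>R g x)) \<in> borel_measurable lborel"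
      using mf mg by measurable
    moreover have "(\<lambda>x. a * (indicator {0..} x *\<^sub>R f x) + b * (indicator {0..} x *\<^sub>R g x)) = (\<lambda>x. indicator {0..} x *\<^sub>R (a * f x + b * g x))"
      by (auto simp: fun_eq_iff split: split_indicator)
    ultimately show ?thesis by simp
  qed
  have "integrable lborel (\<lambda>x. indicator {0..} x *\<^sub>R (a * f x + b * g x)^2)"
  proof (rule Bochner_Integration.integrable_bound)
    show "integrable lborel (\<lambda>x. (2*a^2) * (indicator {0..} x *\<^sub>R (f x)^2) + (2*b^2) * (indicator {0..} x *\<^sub>R (g x)^2))"
      using if2 ig2 by auto
    have "(\<lambda>x. (indicator {0..} x *\<^sub>R (a * f x + b * g x)) * (indicator {0..} x *\<^sub>R (a * f x + b * g x))) \<in> borel_measurable lborel"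
      using m by measurable
    moreover have "(\<lambda>x. (indicator {0..} x *\<^sub>R (a * f x + b * g x)) * (indicator {0..} x *\<^sub>R (a * f x + b * g x))) = (\<lambda>x. indicator {0..} x *\<^sub>R (a * f x + b * g x)^2)"
      by (auto simp: fun_eq_iff power2_eq_square split: split_indicator)
    ultimately show "(\<lambda>x. indicator {0..} x *\<^sub>R (a * f x + b * g x)^2) \<in> borel_measurable lborel" by simp
    show "AE x in lborel. norm (indicator {0..} x *\<^sub>R (a * f x + b * g x)^2) \<le> norm ((2*a^2) * (indicator {0..} x *\<^sub>R (f x)^2) + (2*b^2) * (indicator {0..} x *\<^sub>R (g x)^2))"
    proof (rule AE_I2)
      fix x
      have "(a * f x + b * g x)^2 \<le> 2*a^2*(f x)^2 + 2*b^2*(g x)^2"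
        proof -
        have "(a * f x - b * g x)^2 \<ge> 0" by simp
        then show ?thesis unfolding power2_diff power2_sum power_mult_distrib by linarith
      qed
      then show "norm (indicator {0..} x *\<^sub>R (a * f x + b * g x)^2) \<le> norm ((2*a^2) * (indicator {0..} x *\<^sub>R (f x)^2) + (2*b^2) * (indicator {0..} x *\<^sub>R (g x)^2))"
        by (auto split: split_indicator)
    qed
  qed
  then show ?thesis using m unfolding L2_Rplus_def set_borel_measurable_def set_integrable_def by auto
qed

lemma L2_add: "L2_Rplus f \<Longrightarrow> L2_Rplus g \<Longrightarrow> L2_Rplus (\<lambda>x. f x + g x)"
  using L2_lin[of f g 1 1] by simp
lemma L2_diff: "L2_Rplus f \<Longrightarrow> L2_Rplus g \<Longrightarrow> L2_Rplus (\<lambda>x. f x - g x)"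
  using L2_lin[of f g 1 "-1"] by simp
lemma L2_scale: "L2_Rplus f \<Longrightarrow> L2_Rplus (\<lambda>x. c * f x)"
  using L2_lin[of f f c 0] by simp

lemma l2inner_lin1:
  assumes "L2_Rplus f" "L2_Rplus g" "L2_Rplus h"
  shows "l2inner (\<lambda>x. a * f x + b * g x) h = a * l2inner f h + b * l2inner g h"
proof -
  have "l2inner (\<lambda>x. a * f x + b * g x) h = (LINT x:{0..}|lborel. a * (f x * h x) + b * (g x * h x))"
    unfolding l2inner_def by (simp add: algebra_simps)
  also have "\<dots> = (LINT x:{0..}|lborel. a * (f x * h x)) + (LINT x:{0..}|lborel. b * (g x * h x))"
    by (rule set_integral_add) (auto intro!: set_integrable_mult_right L2_mult_int assms)
  also have "\<dots> = a * l2inner f h + b * l2inner g h"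
    unfolding l2inner_def by (simp add: set_integral_mult_right)
  finally show ?thesis .
qed

lemma l2inner_comm: "l2inner f g = l2inner g f"
  unfolding l2inner_def by (simp add: mult.commute)

lemma l2inner_add1: "L2_Rplus f \<Longrightarrow> L2_Rplus g \<Longrightarrow> L2_Rplus h \<Longrightarrow> l2inner (\<lambda>x. f x + g x) h = l2inner f h + l2inner g h"
  using l2inner_lin1[of f g h 1 1] by simp
lemma l2inner_diff1: "L2_Rplus f \<Longrightarrow> L2_Rplus g \<Longrightarrow> L2_Rplus h \<Longrightarrow> l2inner (\<lambda>x. f x - g x) h = l2inner f h - l2inner g h"
  using l2inner_lin1[of f g h 1 "-1"] by simp
lemma l2inner_scale1: "l2inner (\<lambda>x. c * f x) h = c * l2inner f h"
  unfolding l2inner_def by (simp add: mult.assoc set_integral_mult_right)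
lemma l2inner_add2: "L2_Rplus f \<Longrightarrow> L2_Rplus g \<Longrightarrow> L2_Rplus h \<Longrightarrow> l2inner h (\<lambda>x. f x + g x) = l2inner h f + l2inner h g"
  using l2inner_add1[of f g h] by (simp add: l2inner_comm)
lemma l2inner_diff2: "L2_Rplus f \<Longrightarrow> L2_Rplus g \<Longrightarrow> L2_Rplus h \<Longrightarrow> l2inner h (\<lambda>x. f x - g x) = l2inner h f - l2inner h g"
  using l2inner_diff1[of f g h] by (simp add: l2inner_comm)
lemma l2inner_scale2: "l2inner h (\<lambda>x. c * f x) = c * l2inner h f"
  using l2inner_scale1[of c f h] by (simp add: l2inner_comm)

lemma l2inner_self_nonneg: "l2inner f f \<ge> 0"
  unfolding l2inner_def unfolding set_lebesgue_integral_def by (rule Bochner_Integration.integral_nonneg) (auto split: split_indicator)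

lemma l2norm_sq: "(l2norm f)^2 = l2inner f f"
proof -
  have "(LINT x:{0..}|lborel. (f x)^2) \<ge> 0" unfolding set_lebesgue_integral_def by (rule Bochner_Integration.integral_nonneg) (auto split: split_indicator)
  then show ?thesis unfolding l2norm_def l2inner_def by (simp add: power2_eq_square)
qed

definition ef :: "real \<Rightarrow> real poly \<Rightarrow> real \<Rightarrow> real" where
  "ef b p = (\<lambda>x. exp (- b * x / 2) * poly p x)"

lemma Phat_ef: "Phat b K = {f. \<exists>p. degree p \<le> K \<and> f = ef b p}"
  unfolding Phat_def ef_def by simp

lemma ef_sq: "(ef b p x)^2 = exp (- b * x) * poly (p * p) x"
proof -
  have "exp (- b * x / 2) * exp (- b * x / 2) = exp (- b * x)"
    by (simp add: exp_add[symmetric])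
  then show ?thesis unfolding ef_def by (simp add: power2_eq_square mult_ac)
qed

lemma ef_cont: "continuous_on A (ef b p)"
  unfolding ef_def by (intro continuous_intros) auto

lemma ef_meas: "ef b p \<in> borel_measurable borel"
  by (rule borel_measurable_continuous_onI[OF ef_cont])

lemma ef_L2: assumes "b > 0" shows "L2_Rplus (ef b p)"
  unfolding L2_Rplus_def set_borel_measurable_def
proof
  show "(\<lambda>x. indicator {0..} x *\<^sub>R ef b p x) \<in> borel_measurable lborel"
    using ef_meas[of b p] by measurable
  show "set_integrable lborel {0..} (\<lambda>x. (ef b p x)\<^sup>2)"
    unfolding ef_sq using int_poly_exp[OF assms] by blast
qed

lemma ef_deriv: "(ef b p has_real_derivative ef b (pderiv p - smult (b/2) p) x) (at x)"
proof -
  have "((\<lambda>x. exp (- b * x / 2) * poly p x) has_real_derivative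
      (exp (- b * x / 2) * (- b / 2)) * poly p x + exp (- b * x / 2) * poly (pderiv p) x) (at x)"
  proof -
    have e: "((\<lambda>x. exp (- b * x / 2)) has_real_derivative exp (- b * x / 2) * (- b / 2)) (at x)"
      by (auto intro!: derivative_eq_intros)
    show ?thesis using DERIV_mult[OF e poly_DERIV[of p x]] by (simp add: algebra_simps)
  qed
  then show ?thesis unfolding ef_def by (simp add: algebra_simps)
qed

lemma deriv_ef: "deriv (ef b p) = ef b (pderiv p - smult (b/2) p)"
  using ef_deriv DERIV_imp_deriv by blast

lemma ef_add: "ef b p x + ef b q x = ef b (p + q) x"
  unfolding ef_def by (simp add: algebra_simps)
lemma ef_diff: "ef b p x - ef b q x = ef b (p - q) x"
  unfolding ef_def by (simp add: algebra_simps)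
lemma ef_smult: "c * ef b p x = ef b (smult c p) x"
  unfolding ef_def by (simp add: algebra_simps)
lemma ef_0: "ef b p 0 = poly p 0"
  unfolding ef_def by simp

lemma Phat_lin: "f \<in> Phat b K \<Longrightarrow> g \<in> Phat b K \<Longrightarrow> (\<lambda>x. a * f x + c * g x) \<in> Phat b K"
proof -
  assume "f \<in> Phat b K" "g \<in> Phat b K"
  then obtain p q where p: "degree p \<le> K" "f = ef b p" and q: "degree q \<le> K" "g = ef b q"
    unfolding Phat_ef by auto
  have "(\<lambda>x. a * f x + c * g x) = ef b (smult a p + smult c q)"
    using p q by (auto simp: fun_eq_iff ef_add[symmetric] ef_smult[symmetric])
  moreover have "degree (smult a p + smult c q) \<le> K"
    using p q degree_add_le degree_smult_le order_trans by (metis max.bounded_iff)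
  ultimately show ?thesis unfolding Phat_ef by auto
qed

lemma Phat_L2: "b > 0 \<Longrightarrow> f \<in> Phat b K \<Longrightarrow> L2_Rplus f"
  unfolding Phat_ef using ef_L2 by auto

lemma l2inner_zero_AE:
  assumes "L2_Rplus h" "L2_Rplus psi" "l2inner psi psi = 0"
  shows "l2inner h psi = 0"
proof -
  have i1: "integrable lborel (\<lambda>x. indicator {0..} x *\<^sub>R (psi x * psi x))"
    using L2_mult_int[OF assms(2) assms(2)] unfolding set_integrable_def .
  have "(LBINT x. indicator {0..} x *\<^sub>R (psi x * psi x)) = 0"
    using assms(3) unfolding l2inner_def set_lebesgue_integral_def .
  then have "AE x in lborel. indicator {0..} x *\<^sub>R (psi x * psi x) = 0"
    using integral_nonneg_eq_0_iff_AE[OF i1] by (auto split: split_indicator)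
  then have ae: "AE x in lborel. indicator {0..} x *\<^sub>R (h x * psi x) = 0"
    by eventually_elim (auto split: split_indicator)
  have i2: "integrable lborel (\<lambda>x. indicator {0..} x *\<^sub>R (h x * psi x))"
    using L2_mult_int[OF assms(1) assms(2)] unfolding set_integrable_def .
  have "(LBINT x. indicator {0..} x *\<^sub>R (h x * psi x)) = 0"
    by (rule integral_eq_zero_AE[OF ae])
  then show ?thesis unfolding l2inner_def set_lebesgue_integral_def by simp
qed

lemma ef_zero:
  assumes "b > 0" "l2inner (ef b p) (ef b p) = 0"
  shows "p = 0"
proof (rule ccontr)
  assume p: "p \<noteq> 0"
  have i1: "integrable lborel (\<lambda>x. indicator {0..} x *\<^sub>R (ef b p x * ef b p x))"
    using L2_mult_int[OF ef_L2 ef_L2, OF assms(1) assms(1)] unfolding set_integrable_def .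
  have "(LBINT x. indicator {0..} x *\<^sub>R (ef b p x * ef b p x)) = 0"
    using assms(2) unfolding l2inner_def set_lebesgue_integral_def .
  then have "AE x in lborel. indicator {0..} x *\<^sub>R (ef b p x * ef b p x) = 0"
    using integral_nonneg_eq_0_iff_AE[OF i1] by (auto split: split_indicator)
  moreover have "AE x in lborel. x \<notin> {x. poly p x = 0}"
    by (rule AE_not_in[OF finite_imp_null_set_lborel[OF poly_roots_finite[OF p]]])
  ultimately have "AE x in lborel. x \<notin> {0..1::real}"
    by eventually_elim (auto simp: ef_def split: split_indicator)
  then have "{0..1::real} \<in> null_sets lborel"
    by (subst AE_iff_null_sets) auto
  then show False using null_setsD1 by fastforce
qed

lemma hproj_unique:
  assumes "b > 0" "L2_Rplus f" "g1 \<in> Phat b K" "g2 \<in> Phat b K"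
    "\<forall>v\<in>Phat b K. l2inner (\<lambda>x. f x - g1 x) v = 0"
    "\<forall>v\<in>Phat b K. l2inner (\<lambda>x. f x - g2 x) v = 0"
  shows "g1 = g2"
proof -
  obtain p1 p2 where p: "degree p1 \<le> K" "g1 = ef b p1" "degree p2 \<le> K" "g2 = ef b p2"
    using assms(3,4) unfolding Phat_ef by auto
  have dP: "(\<lambda>x. 1 * g1 x + (-1) * g2 x) \<in> Phat b K" by (rule Phat_lin[OF assms(3,4)])
  have d: "(\<lambda>x. 1 * g1 x + (-1) * g2 x) = ef b (p1 - p2)"
    using p by (auto simp: fun_eq_iff ef_diff[symmetric])
  have L: "L2_Rplus g1" "L2_Rplus g2" using Phat_L2 assms by auto
  have "l2inner (\<lambda>x. 1 * (f x - g2 x) + (-1) * (f x - g1 x)) (ef b (p1 - p2)) = 0"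
    using assms(5,6) dP d
    by (subst l2inner_lin1) (auto intro!: L2_diff L assms(2) ef_L2 assms(1))
  then have "l2inner (ef b (p1 - p2)) (ef b (p1 - p2)) = 0"
    using d by (simp add: algebra_simps)
  then have "p1 - p2 = 0" by (rule ef_zero[OF assms(1)])
  then show ?thesis using p by simp
qed

lemma l2inner_lin2:
  assumes "L2_Rplus f" "L2_Rplus g" "L2_Rplus h"
  shows "l2inner h (\<lambda>x. a * f x + c * g x) = a * l2inner h f + c * l2inner h g"
  using l2inner_lin1[OF assms, of a c] by (simp add: l2inner_comm)

lemma memS: "s \<in> S \<Longrightarrow> f = (\<lambda>x. s x + c * chi x) \<Longrightarrow> f \<in> {\<lambda>x. s x + c * chi x | s c. s \<in> S}"
  for chi :: "'a \<Rightarrow> 'b::comm_ring_1"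
  unfolding mem_Collect_eq by (rule exI[of _ s], rule exI[of _ c]) simp
lemma memE: "f \<in> {\<lambda>x. s x + c * chi x | s c. s \<in> S} \<Longrightarrow> (\<And>s c. s \<in> S \<Longrightarrow> f = (\<lambda>x. s x + c * chi x) \<Longrightarrow> P) \<Longrightarrow> P"
  for chi :: "'a \<Rightarrow> 'b::comm_ring_1"
  unfolding mem_Collect_eq by (elim exE conjE)

lemma proj_step:
  assumes closed: "\<And>f g a c. f \<in> S \<Longrightarrow> g \<in> S \<Longrightarrow> (\<lambda>x. a * f x + c * g x) \<in> S"
    and L2S: "\<And>f. f \<in> S \<Longrightarrow> L2_Rplus f"
    and L2chi: "L2_Rplus chi"
    and proj: "\<And>f. L2_Rplus f \<Longrightarrow> \<exists>g\<in>S. \<forall>v\<in>S. l2inner (\<lambda>x. f x - g x) v = 0"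
    and f: "L2_Rplus f"
  shows "\<exists>g\<in>{\<lambda>x. s x + c * chi x | s c. s \<in> S}.
           \<forall>v\<in>{\<lambda>x. s x + c * chi x | s c. s \<in> S}. l2inner (\<lambda>x. f x - g x) v = 0"
proof -
  obtain Pc where Pc: "Pc \<in> S" "\<forall>v\<in>S. l2inner (\<lambda>x. chi x - Pc x) v = 0"
    using proj[OF L2chi] by blast
  obtain g0 where g0: "g0 \<in> S" "\<forall>v\<in>S. l2inner (\<lambda>x. f x - g0 x) v = 0"
    using proj[OF f] by blast
  define psi where "psi = (\<lambda>x. chi x - Pc x)"
  define h where "h = (\<lambda>x. f x - g0 x)"
  have Lpsi: "L2_Rplus psi" unfolding psi_def by (intro L2_diff L2chi L2S Pc)
  have Lh: "L2_Rplus h" unfolding h_def by (intro L2_diff f L2S g0)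
  have decomp: "\<And>s c. s \<in> S \<Longrightarrow> (\<lambda>x. s x + c * chi x) = (\<lambda>x. 1 * (\<lambda>x. 1 * s x + c * Pc x) x + c * psi x)
       \<and> (\<lambda>x. 1 * s x + c * Pc x) \<in> S"
  proof
    fix s c assume s: "s \<in> S"
    show "(\<lambda>x. s x + c * chi x) = (\<lambda>x. 1 * (\<lambda>x. 1 * s x + c * Pc x) x + c * psi x)"
      unfolding psi_def by (auto simp: fun_eq_iff algebra_simps)
    show "(\<lambda>x. 1 * s x + c * Pc x) \<in> S" by (rule closed[OF s Pc(1)])
  qed
  have key: "\<And>r. L2_Rplus r \<Longrightarrow> (\<forall>s\<in>S. l2inner r s = 0) \<Longrightarrow> l2inner r psi = 0 \<Longrightarrow>
      \<forall>v\<in>{\<lambda>x. s x + c * chi x | s c. s \<in> S}. l2inner r v = 0"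
  proof (intro ballI)
    fix r v assume r: "L2_Rplus r" "\<forall>s\<in>S. l2inner r s = 0" "l2inner r psi = 0"
      and v: "v \<in> {\<lambda>x. s x + c * chi x | s c. s \<in> S}"
    then obtain s c where sc: "s \<in> S" "v = (\<lambda>x. s x + c * chi x)" by auto
    from decomp[OF sc(1), of c] have d: "v = (\<lambda>x. 1 * (\<lambda>x. 1 * s x + c * Pc x) x + c * psi x)"
      and s': "(\<lambda>x. 1 * s x + c * Pc x) \<in> S" using sc by auto
    show "l2inner r v = 0" unfolding d
      by (subst l2inner_lin2) (use r s' L2S Lpsi in auto)
  qed
  show ?thesis
  proof (cases "l2inner psi psi = 0")
    case True
    have "l2inner h psi = 0" by (rule l2inner_zero_AE[OF Lh Lpsi True])
    then have "\<forall>v\<in>{\<lambda>x. s x + c * chi x | s c. s \<in> S}. l2inner h v = 0"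
      by (intro key Lh) (use g0 in \<open>auto simp: h_def\<close>)
    moreover have "g0 \<in> {\<lambda>x. s x + c * chi x | s c. s \<in> S}"
      by (rule CollectI, rule exI[of _ g0], rule exI[of _ 0]) (use g0 in auto)
    ultimately show ?thesis unfolding h_def by (rule bexI)
  next
    case False
    define c0 where "c0 = l2inner h psi / l2inner psi psi"
    define g where "g = (\<lambda>x. g0 x + c0 * psi x)"
    have r: "(\<lambda>x. f x - g x) = (\<lambda>x. 1 * h x + (- c0) * psi x)"
      unfolding g_def h_def by (auto simp: fun_eq_iff)
    have A: "\<forall>v\<in>{\<lambda>x. s x + c * chi x | s c. s \<in> S}. l2inner (\<lambda>x. 1 * h x + (- c0) * psi x) v = 0"
    proof (rule key)
      show "L2_Rplus (\<lambda>x. 1 * h x + - c0 * psi x)" by (intro L2_lin Lh Lpsi)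
      show "\<forall>s\<in>S. l2inner (\<lambda>x. 1 * h x + - c0 * psi x) s = 0"
      proof
        fix s assume s: "s \<in> S"
        have "l2inner psi s = 0" using Pc s unfolding psi_def by auto
        moreover have "l2inner h s = 0" using g0 s unfolding h_def by auto
        ultimately show "l2inner (\<lambda>x. 1 * h x + - c0 * psi x) s = 0"
          by (subst l2inner_lin1) (use Lh Lpsi L2S s in auto)
      qed
      show "l2inner (\<lambda>x. 1 * h x + - c0 * psi x) psi = 0"
        by (subst l2inner_lin1) (use Lh Lpsi False in \<open>auto simp: c0_def\<close>)
    qed
    have B: "g \<in> {\<lambda>x. s x + c * chi x | s c. s \<in> S}"
    proof -
      have "g = (\<lambda>x. (\<lambda>x. 1 * g0 x + (- c0) * Pc x) x + c0 * chi x)"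
        unfolding g_def psi_def by (auto simp: fun_eq_iff algebra_simps)
      moreover have "(\<lambda>x. 1 * g0 x + (- c0) * Pc x) \<in> S" by (rule closed[OF g0(1) Pc(1)])
      ultimately show ?thesis by (intro memS)
    qed
    from A have A': "\<forall>v\<in>{\<lambda>x. s x + c * chi x | s c. s \<in> S}. l2inner (\<lambda>x. f x - g x) v = 0"
      by (simp only: r)
    show ?thesis using A' B by (rule bexI)
  qed
qed

lemma degree_le_coeffs: "(\<And>i. i > n \<Longrightarrow> coeff p i = 0) \<Longrightarrow> degree p \<le> n"
  by (simp add: degree_le)

lemma Phat_Suc: "Phat b (Suc K) = {\<lambda>x. s x + c * ef b (monom 1 (Suc K)) x | s c. s \<in> Phat b K}"
proof (intro set_eqI iffI)
  fix f assume "f \<in> Phat b (Suc K)"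
  then obtain p where p: "degree p \<le> Suc K" "f = ef b p" unfolding Phat_ef by auto
  define q where "q = p - monom (coeff p (Suc K)) (Suc K)"
  have "degree q \<le> K"
  proof (rule degree_le_coeffs)
    fix i assume "i > K"
    then show "coeff q i = 0" using p(1) coeff_eq_0[of p i] unfolding q_def
      by (cases "i = Suc K") auto
  qed
  moreover have "f = (\<lambda>x. ef b q x + coeff p (Suc K) * ef b (monom 1 (Suc K)) x)"
    unfolding p q_def by (auto simp: fun_eq_iff ef_def poly_monom algebra_simps)
  ultimately show "f \<in> {\<lambda>x. s x + c * ef b (monom 1 (Suc K)) x | s c. s \<in> Phat b K}"
    unfolding Phat_ef by blast
next
  fix f assume "f \<in> {\<lambda>x. s x + c * ef b (monom 1 (Suc K)) x | s c. s \<in> Phat b K}"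
  then obtain q c where q: "degree q \<le> K" "f = (\<lambda>x. ef b q x + c * ef b (monom 1 (Suc K)) x)"
    unfolding Phat_ef by auto
  have "f = ef b (q + monom c (Suc K))"
    unfolding q(2) by (simp add: fun_eq_iff ef_smult ef_add smult_monom)
  moreover have "degree (q + monom c (Suc K)) \<le> Suc K"
  proof -
    have a: "degree q \<le> Suc K" using q(1) by simp
    show ?thesis by (rule Polynomial.degree_add_le[OF a degree_monom_le])
  qed
  ultimately show "f \<in> Phat b (Suc K)" unfolding Phat_ef by blast
qed

lemma Phat_0: "Phat b 0 = {\<lambda>x. s x + c * ef b (monom 1 0) x | s c. s \<in> {\<lambda>x. 0}}"
proof (intro set_eqI iffI)
  fix f assume "f \<in> Phat b 0"
  then obtain p where p: "degree p \<le> 0" "f = ef b p" unfolding Phat_ef by auto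
  have eq: "p = [:coeff p 0:]" using p(1) by (metis degree_0_id le_zero_eq)
  have "f = (\<lambda>x. 0 + coeff p 0 * ef b (monom 1 0) x)"
    unfolding p(2) ef_def by (subst eq) (simp add: fun_eq_iff poly_monom)
  then show "f \<in> {\<lambda>x. s x + c * ef b (monom 1 0) x | s c. s \<in> {\<lambda>x. 0}}"
    by auto
next
  fix f assume "f \<in> {\<lambda>x. s x + c * ef b (monom 1 0) x | s c. s \<in> {\<lambda>x. 0}}"
  then obtain s c where sc: "f = (\<lambda>x. s x + c * ef b (monom 1 0) x)" "s \<in> {\<lambda>x. 0}" by (rule memE)
  from sc(2) have "s = (\<lambda>x. 0)" by simp
  with sc(1) have "f = ef b (monom c 0)" by (simp add: fun_eq_iff ef_smult smult_monom monom_0)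
  moreover have "degree (monom c 0) \<le> 0" using degree_monom_le[of c 0] by simp
  ultimately show "f \<in> Phat b 0" unfolding Phat_ef by blast
qed

lemma proj_exists:
  assumes "b > 0"
  shows "L2_Rplus f \<Longrightarrow> \<exists>g\<in>Phat b K. \<forall>v\<in>Phat b K. l2inner (\<lambda>x. f x - g x) v = 0"
proof (induction K arbitrary: f)
  case 0
  show ?case unfolding Phat_0
  proof (rule proj_step)
    show "\<exists>g\<in>{\<lambda>x. 0}. \<forall>v\<in>{\<lambda>x. 0}. l2inner (\<lambda>x. f x - g x) v = 0" for f :: "real \<Rightarrow> real"
      by (auto simp: l2inner_def)
    show "(\<lambda>x. a * f x + c * g x) \<in> {\<lambda>x. 0}" if "f \<in> {\<lambda>x. 0}" "g \<in> {\<lambda>x. 0}" for f g :: "real \<Rightarrow> real" and a c :: real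
      using that by simp
    have "L2_Rplus (\<lambda>x. 0 * ef b 1 x)" by (rule L2_scale[OF ef_L2[OF assms]])
    then show "L2_Rplus f" if "f \<in> {\<lambda>x. 0}" for f :: "real \<Rightarrow> real"
      using that by simp
    show "L2_Rplus (ef b (monom 1 0))" by (rule ef_L2[OF assms])
    show "L2_Rplus f" by (rule "0")
  qed
next
  case (Suc K)
  show ?case unfolding Phat_Suc
    by (rule proj_step[OF Phat_lin Phat_L2[OF assms] ef_L2[OF assms] Suc.IH Suc.prems])
qed

lemma hproj_in:
  assumes "b > 0" "L2_Rplus f"
  shows "hproj b K f \<in> Phat b K"
proof -
  obtain g where g: "g \<in> Phat b K" "\<forall>v\<in>Phat b K. l2inner (\<lambda>x. f x - g x) v = 0"
    using proj_exists[OF assms(1) assms(2), of K] by (elim bexE)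
  have "\<exists>!g. g \<in> Phat b K \<and> (\<forall>v\<in>Phat b K. l2inner (\<lambda>x. f x - g x) v = 0)"
  proof (rule ex1I[of _ g])
    show "g \<in> Phat b K \<and> (\<forall>v\<in>Phat b K. l2inner (\<lambda>x. f x - g x) v = 0)" using g by (intro conjI)
    fix y assume y: "y \<in> Phat b K \<and> (\<forall>v\<in>Phat b K. l2inner (\<lambda>x. f x - y x) v = 0)"
    show "y = g" using hproj_unique[OF assms conjunct1[OF y] g(1) conjunct2[OF y] g(2)] .
  qed
  from theI'[OF this] show ?thesis unfolding hproj_def by (rule conjunct1)
qed

lemma square_formula:
  fixes g :: "real \<Rightarrow> real" and X :: real
  assumes X: "0 \<le> X" and gi: "set_integrable lborel {0..X} g"
  shows "2 * (LINT x:{0..X}|lborel. (LINT t:{0..x}|lborel. g t) * g x) = (LINT t:{0..X}|lborel. g t)^2"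
proof -
  have PS: "pair_sigma_finite lborel lborel" by (rule pair_sigma_finite.intro) (rule lborel.sigma_finite_measure_axioms)+
  define h where "h = (\<lambda>s. indicator {0..X} s * g s)"
  define F where "F = (\<lambda>x. LINT t:{0..x}|lborel. g t)"
  have hi: "integrable lborel h" using gi unfolding h_def set_integrable_def by simp
  have hm[measurable]: "h \<in> borel_measurable lborel" using hi by auto
  have hmb[measurable]: "h \<in> borel_measurable borel" using hm by simp
  have I: "integral\<^sup>L lborel h = F X" unfolding h_def F_def set_lebesgue_integral_def by simp
  have J: "(LINT x:{0..X}|lborel. F x * g x) = (\<integral>s. h s * F s \<partial>lborel)"
    unfolding h_def set_lebesgue_integral_def by (simp add: mult_ac)
  have c1: "(\<integral>t. indicator {..s} t * h t \<partial>lborel) = h s * F s / h s" if "h s \<noteq> 0" for s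
  proof -
    have s: "s \<in> {0..X}" using that unfolding h_def by (metis indicator_simps(2) mult_zero_left)
    have "(\<lambda>t. indicator {..s} t * h t) = (\<lambda>t. indicator {0..s} t *\<^sub>R g t)"
      using s unfolding h_def by (auto simp: fun_eq_iff split: split_indicator)
    then show ?thesis using that unfolding F_def set_lebesgue_integral_def by simp
  qed
  have c1': "h s * (\<integral>t. indicator {..s} t * h t \<partial>lborel) = h s * F s" for s
    using c1[of s] by (cases "h s = 0") auto
  have c2': "h t * (\<integral>s. indicator {..<t} s * h s \<partial>lborel) = h t * F t" for t
  proof (cases "h t = 0")
    case False
    then have t: "t \<in> {0..X}" unfolding h_def by (metis indicator_simps(2) mult_zero_left)
    have "(\<integral>s. indicator {..<t} s * h s \<partial>lborel) = (\<integral>s. indicator {0..t} s *\<^sub>R g s \<partial>lborel)"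
    proof (rule integral_cong_AE)
      show "AE s in lborel. indicator {..<t} s * h s = indicator {0..t} s *\<^sub>R g s"
        using AE_lborel_singleton[of t] by eventually_elim (use t in \<open>auto simp: h_def split: split_indicator\<close>)
      show "(\<lambda>s. indicator {..<t} s * h s) \<in> borel_measurable lborel" by measurable
      have "(\<lambda>s. indicator {0..t} s *\<^sub>R g s) = (\<lambda>s. indicator {0..t} s * h s)"
        using t by (auto simp: h_def fun_eq_iff split: split_indicator)
      moreover have "(\<lambda>s. indicator {0..t} s * h s) \<in> borel_measurable lborel" by measurable
      ultimately show "(\<lambda>s. indicator {0..t} s *\<^sub>R g s) \<in> borel_measurable lborel" by simp
    qed
    then show ?thesis unfolding F_def set_lebesgue_integral_def by simp
  qed simp
  define G1 where "G1 = (\<lambda>(s::real,t::real). h s * (indicator {..s} t * h t))"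
  define G2 where "G2 = (\<lambda>(s::real,t::real). h s * (indicator {..<s} t * h t))"
  have HI: "integrable (lborel \<Otimes>\<^sub>M lborel) (\<lambda>(s,t). h s * h t)"
  proof (rule pair_sigma_finite.Fubini_integrable[OF PS])
    show "(\<lambda>(s,t). h s * h t) \<in> borel_measurable (lborel \<Otimes>\<^sub>M lborel)" by measurable
    have "(\<lambda>s. \<integral>t. norm (case (s, t) of (s, t) \<Rightarrow> h s * h t) \<partial>lborel) = (\<lambda>s. \<bar>h s\<bar> * (\<integral>t. \<bar>h t\<bar> \<partial>lborel))"
      by (simp add: abs_mult)
    moreover have "integrable lborel (\<lambda>s. \<bar>h s\<bar> * (\<integral>t. \<bar>h t\<bar> \<partial>lborel))"
      using hi by (intro integrable_mult_left) auto
    ultimately show "integrable lborel (\<lambda>s. \<integral>t. norm (case (s, t) of (s, t) \<Rightarrow> h s * h t) \<partial>lborel)"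
      by simp
    show "AE s in lborel. integrable lborel (\<lambda>t. case (s, t) of (s, t) \<Rightarrow> h s * h t)"
      using hi by auto
  qed
  have G1I: "integrable (lborel \<Otimes>\<^sub>M lborel) G1"
  proof (rule Bochner_Integration.integrable_bound[OF HI])
    have "(\<lambda>(s::real,t::real). h s * ((if t \<le> s then 1 else 0) * h t)) \<in> borel_measurable (lborel \<Otimes>\<^sub>M lborel)" by measurable
    then show "G1 \<in> borel_measurable (lborel \<Otimes>\<^sub>M lborel)" unfolding G1_def by (simp add: indicator_def case_prod_beta)
    show "AE x in lborel \<Otimes>\<^sub>M lborel. norm (G1 x) \<le> norm (case x of (s, t) \<Rightarrow> h s * h t)"
      by (rule AE_I2) (auto simp: G1_def abs_mult split: split_indicator)
  qed
  have G2I: "integrable (lborel \<Otimes>\<^sub>M lborel) G2"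
  proof (rule Bochner_Integration.integrable_bound[OF HI])
    have "(\<lambda>(s::real,t::real). h s * ((if t < s then 1 else 0) * h t)) \<in> borel_measurable (lborel \<Otimes>\<^sub>M lborel)" by measurable
    then show "G2 \<in> borel_measurable (lborel \<Otimes>\<^sub>M lborel)" unfolding G2_def by (simp add: indicator_def case_prod_beta)
    show "AE x in lborel \<Otimes>\<^sub>M lborel. norm (G2 x) \<le> norm (case x of (s, t) \<Rightarrow> h s * h t)"
      by (rule AE_I2) (auto simp: G2_def abs_mult split: split_indicator)
  qed
  have "F X * F X = (\<integral>s. h s * F X \<partial>lborel)" using I by simp
  also have "\<dots> = (\<integral>s. (\<integral>t. G1 (s,t) \<partial>lborel) + (\<integral>t. G2 (t,s) \<partial>lborel) \<partial>lborel)"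
  proof (rule Bochner_Integration.integral_cong[OF refl])
    fix s
    have "(\<integral>t. G1 (s,t) \<partial>lborel) + (\<integral>t. G2 (t,s) \<partial>lborel) =
        (\<integral>t. G1 (s,t) + G2 (t,s) \<partial>lborel)"
    proof (rule Bochner_Integration.integral_add[symmetric])
      have "integrable lborel (\<lambda>t. h s * (indicator {..s} t *\<^sub>R h t))"
        by (intro integrable_mult_right integrable_mult_indicator hi) auto
      then show "integrable lborel (\<lambda>t. G1 (s,t))" unfolding G1_def by simp
      have "integrable lborel (\<lambda>t. h s * (indicator {s<..} t *\<^sub>R h t))"
        by (intro integrable_mult_right integrable_mult_indicator hi) auto
      moreover have "(\<lambda>t. h s * (indicator {s<..} t *\<^sub>R h t)) = (\<lambda>t. G2 (t,s))"
        unfolding G2_def by (auto simp: fun_eq_iff split: split_indicator)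
      ultimately show "integrable lborel (\<lambda>t. G2 (t,s))" by metis
    qed
    also have "\<dots> = (\<integral>t. h s * h t \<partial>lborel)"
      unfolding G1_def G2_def by (intro Bochner_Integration.integral_cong) (auto split: split_indicator)
    also have "\<dots> = h s * F X" using I by simp
    finally show "h s * F X = (\<integral>t. G1 (s,t) \<partial>lborel) + (\<integral>t. G2 (t,s) \<partial>lborel)" by simp
  qed
  also have "\<dots> = (\<integral>s. (\<integral>t. G1 (s,t) \<partial>lborel) \<partial>lborel) + (\<integral>s. (\<integral>t. G2 (t,s) \<partial>lborel) \<partial>lborel)"
  proof (rule Bochner_Integration.integral_add)
    show "integrable lborel (\<lambda>s. \<integral>t. G1 (s,t) \<partial>lborel)" by (rule pair_sigma_finite.integrable_fst'[OF PS G1I])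
    have "integrable lborel (\<lambda>x. \<integral>y. (\<lambda>(x,y). G2 (y,x)) (x, y) \<partial>lborel)" 
      by (rule pair_sigma_finite.integrable_fst'[OF PS pair_sigma_finite.integrable_product_swap[OF PS G2I]])
    then show "integrable lborel (\<lambda>s. \<integral>t. G2 (t,s) \<partial>lborel)" by simp
  qed
  also have "(\<integral>s. (\<integral>t. G2 (t,s) \<partial>lborel) \<partial>lborel) = (\<integral>s. (\<integral>t. G2 (s,t) \<partial>lborel) \<partial>lborel)"
    using pair_sigma_finite.Fubini_integral[OF PS, of "\<lambda>s t. G2 (s,t)"] G2I by simp
  also have "(\<integral>s. (\<integral>t. G1 (s,t) \<partial>lborel) \<partial>lborel) = (\<integral>s. h s * F s \<partial>lborel)"
  proof -
    have "(\<integral>t. G1 (s,t) \<partial>lborel) = h s * F s" for s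
    proof -
      have "(\<integral>t. G1 (s,t) \<partial>lborel) = h s * (\<integral>t. indicator {..s} t * h t \<partial>lborel)"
        unfolding G1_def by (simp add: integral_mult_right_zero)
      then show ?thesis using c1'[of s] by (rule trans)
    qed
    then show ?thesis by simp
  qed
  also have "(\<integral>s. (\<integral>t. G2 (s,t) \<partial>lborel) \<partial>lborel) = (\<integral>s. h s * F s \<partial>lborel)"
  proof -
    have "(\<integral>t. G2 (s,t) \<partial>lborel) = h s * F s" for s
    proof -
      have "(\<integral>t. G2 (s,t) \<partial>lborel) = h s * (\<integral>t. indicator {..<s} t * h t \<partial>lborel)"
        unfolding G2_def by (simp add: integral_mult_right_zero)
      then show ?thesis using c2'[of s] by (rule trans)
    qed
    then show ?thesis by simp
  qed
  finally show ?thesis using J by (simp add: power2_eq_square F_def)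
qed

lemma nonneg_key:
  fixes g F :: "real \<Rightarrow> real"
  assumes loc: "\<And>x. x \<ge> 0 \<Longrightarrow> set_integrable lborel {0..x} g \<and> F x = (LINT t:{0..x}|lborel. g t)"
    and int: "set_integrable lborel {0..} (\<lambda>x. F x * g x)"
  shows "0 \<le> (LINT x:{0..}|lborel. F x * g x)"
proof (rule tendsto_lowerbound)
  show "((\<lambda>b. LINT x:{0..b}|lborel. F x * g x) \<longlongrightarrow> (LINT x:{0..}|lborel. F x * g x)) at_top"
    by (rule tendsto_set_lebesgue_integral_at_top[OF _ int]) auto
  show "\<forall>\<^sub>F b in at_top. 0 \<le> (LINT x:{0..b}|lborel. F x * g x)"
  proof (rule eventually_at_top_linorderI[of 0])
    fix b :: real assume b: "b \<ge> 0"
    have "(LINT x:{0..b}|lborel. F x * g x) = (LINT x:{0..b}|lborel. (LINT t:{0..x}|lborel. g t) * g x)"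
      by (rule set_lebesgue_integral_cong) (use loc in auto)
    also have "\<dots> = (LINT t:{0..b}|lborel. g t)^2 / 2"
      using square_formula[OF b conjunct1[OF loc[OF b]]] by simp
    finally have e: "(LINT x:{0..b}|lborel. F x * g x) = (LINT t:{0..b}|lborel. g t)^2 / 2" .
    show "0 \<le> (LINT x:{0..b}|lborel. F x * g x)" unfolding e by simp
  qed
qed simp

lemma antideriv_poly:
  fixes p :: "real poly"
  shows "\<exists>q. pderiv q = p \<and> poly q 0 = 0 \<and> degree q \<le> Suc (degree p)"
proof -
  define q where "q = Poly (0 # map (\<lambda>i. coeff p i / real (Suc i)) [0..<Suc (degree p)])"
  have cq: "coeff q (Suc i) = coeff p i / real (Suc i)" for i
    unfolding q_def by (cases "i \<le> degree p") (auto simp: nth_default_def coeff_eq_0 nth_append)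
  have "pderiv q = p"
    by (rule poly_eqI) (simp add: coeff_pderiv cq)
  moreover have "poly q 0 = 0" unfolding q_def by (simp add: poly_0_coeff_0 nth_default_def)
  moreover have "degree q \<le> Suc (degree p)"
  proof (rule degree_le)
    show "\<forall>i>Suc (degree p). coeff q i = 0"
    proof (intro allI impI)
      fix i assume i: "i > Suc (degree p)"
      then obtain j where j: "i = Suc j" "j > degree p" by (cases i) auto
      then show "coeff q i = 0" using cq[of j] coeff_eq_0[OF j(2)] by simp
    qed
  qed
  ultimately show ?thesis by blast
qed

lemma l2inner_sq_add:
  assumes "L2_Rplus f" "L2_Rplus g"
  shows "l2inner (\<lambda>x. f x + g x) (\<lambda>x. f x + g x) = l2inner f f + 2 * l2inner f g + l2inner g g"
proof -
  have L: "L2_Rplus (\<lambda>x. f x + g x)" by (rule L2_add[OF assms])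
  have "l2inner (\<lambda>x. f x + g x) (\<lambda>x. f x + g x) = l2inner f (\<lambda>x. f x + g x) + l2inner g (\<lambda>x. f x + g x)"
    by (rule l2inner_add1[OF assms L])
  also have "\<dots> = l2inner f f + l2inner f g + (l2inner g f + l2inner g g)"
    using l2inner_add2[OF assms assms(1)] l2inner_add2[OF assms assms(2)] by simp
  finally show ?thesis by (simp add: l2inner_comm[of g f])
qed

lemma l2inner_sq_lin:
  assumes "L2_Rplus f" "L2_Rplus g"
  shows "l2inner (\<lambda>x. s * f x + t * g x) (\<lambda>x. s * f x + t * g x) = s^2 * l2inner f f + 2 * s * t * l2inner f g + t^2 * l2inner g g"
proof -
  have "l2inner (\<lambda>x. s * f x + t * g x) (\<lambda>x. s * f x + t * g x) =
     l2inner (\<lambda>x. s * f x) (\<lambda>x. s * f x) + 2 * l2inner (\<lambda>x. s * f x) (\<lambda>x. t * g x) + l2inner (\<lambda>x. t * g x) (\<lambda>x. t * g x)"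
    by (rule l2inner_sq_add) (auto intro: L2_scale assms)
  then show ?thesis by (simp add: l2inner_scale1 l2inner_scale2 power2_eq_square)
qed

lemma cs_real:
  fixes m a b :: real
  assumes h: "\<And>s t. 2 * s * t * m \<le> s^2 * a + t^2 * b" and a: "a \<ge> 0" and b: "b \<ge> 0"
  shows "m \<le> sqrt a * sqrt b"
proof (cases "a > 0 \<and> b > 0")
  case True
  have "2 * sqrt b * sqrt a * m \<le> (sqrt b)^2 * a + (sqrt a)^2 * b" by (rule h)
  then have "(2 * (sqrt a * sqrt b)) * m \<le> (2 * (sqrt a * sqrt b)) * (sqrt a * sqrt b)"
    using a b by (simp add: algebra_simps)
  moreover have "2 * (sqrt a * sqrt b) > 0" using True by simp
  ultimately show ?thesis by (rule mult_left_le_imp_le)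
next
  case False
  show ?thesis
  proof (rule ccontr)
    assume m: "\<not> m \<le> sqrt a * sqrt b"
    from False a b have "a = 0 \<or> b = 0" by auto
    then have m0: "m > 0" using m by auto
    show False
    proof (cases "a = 0")
      case True
      have "2 * (b+1) * m * m \<le> (b+1)^2 * a + m^2 * b" by (rule h)
      then have "(b+2) * (m * m) \<le> 0" using True by (simp add: power2_eq_square algebra_simps)
      moreover have "(b+2) * (m * m) > 0" using m0 b by simp
      ultimately show False by linarith
    next
      case False
      then have b0: "b = 0" using \<open>a = 0 \<or> b = 0\<close> by auto
      have "2 * m * (a+1) * m \<le> m^2 * a + (a+1)^2 * b" by (rule h)
      then have "(a+2) * (m * m) \<le> 0" using b0 by (simp add: power2_eq_square algebra_simps)
      moreover have "(a+2) * (m * m) > 0" using m0 a by simp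
      ultimately show False by linarith
    qed
  qed
qed

lemma final_real:
  fixes b E ED A B :: real
  assumes b: "b > 0" and E: "E \<ge> 0" and ED: "ED \<ge> 0" and A: "A \<ge> 0" and B: "B \<ge> 0"
    and h: "ED + b^2 / 4 * E \<le> (A + b / 2 * B)^2"
  shows "sqrt (E + ED) \<le> (2 + 2 / b) * A + (b + 1) * B"
proof (cases "b \<ge> 2")
  case True
  have "2 * 2 \<le> b * b" using True by (intro mult_mono) auto
  then have k: "1 \<le> b^2 / 4" by (simp add: power2_eq_square)
  have "1 * E \<le> b^2 / 4 * E" by (rule mult_right_mono[OF k E])
  then have "E + ED \<le> (A + b / 2 * B)^2" using h by linarith
  moreover have "0 \<le> b / 2 * B" using b B by simp
  ultimately have "sqrt (E + ED) \<le> A + b / 2 * B" using A by (intro real_le_lsqrt) auto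
  moreover have "1 * A \<le> (2 + 2 / b) * A" by (rule mult_right_mono) (use b A in auto)
  moreover have "b / 2 * B \<le> (b + 1) * B" by (rule mult_right_mono) (use b B in auto)
  ultimately show ?thesis by linarith
next
  case False
  have "b * b \<le> 2 * 2" using False b by (intro mult_mono) auto
  then have q: "1 \<le> 4 / b^2" using b by (subst le_divide_eq) (auto simp: power2_eq_square)
  have "1 * ED \<le> 4 / b^2 * ED" by (rule mult_right_mono[OF q ED])
  then have "E + ED \<le> E + 4 / b^2 * ED" by linarith
  also have "\<dots> = 4 / b^2 * (ED + b^2 / 4 * E)" using b by (simp add: field_simps)
  also have "\<dots> \<le> 4 / b^2 * (A + b / 2 * B)^2" by (rule mult_left_mono[OF h]) simp
  also have "\<dots> = (2 / b * A + B)^2" using b by (simp add: field_simps power2_eq_square)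
  finally have s: "E + ED \<le> (2 / b * A + B)^2" .
  have "0 \<le> 2 / b * A" using b A by simp
  then have "sqrt (E + ED) \<le> 2 / b * A + B" using s B by (intro real_le_lsqrt) auto
  moreover have "2 / b * A \<le> (2 + 2 / b) * A" by (rule mult_right_mono) (use b A in auto)
  moreover have "1 * B \<le> (b + 1) * B" by (rule mult_right_mono) (use b B in auto)
  ultimately show ?thesis by linarith
qed

lemma l2norm_inner: "l2norm f = sqrt (l2inner f f)"
  unfolding l2norm_def l2inner_def by (simp add: power2_eq_square)

theorem mainTheorem14:
  fixes \<beta> :: real and N :: nat and u du w :: "real \<Rightarrow> real"
  assumes "\<beta> > 0" and "N \<ge> 1"
    and "H10_Rplus u du"
    and "w \<in> P0hat \<beta> N"
    and "\<forall>v\<in>P0hat \<beta> N.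
           l2inner (\<lambda>x. du x - deriv w x) (deriv v)
           + \<beta>^2 / 4 * l2inner (\<lambda>x. u x - w x) v = 0"
  shows "h1norm (\<lambda>x. u x - w x) (\<lambda>x. du x - deriv w x)
         \<le> (2 + 2 / \<beta>) * l2norm (\<lambda>x. du x - hproj \<beta> (N - 1) du x)
           + (\<beta> + 1) * l2norm (\<lambda>x. u x - hproj \<beta> (N - 1) u x)"
proof -
  have b: "\<beta> > 0" using assms(1) .
  have Lu: "L2_Rplus u" and Ldu: "L2_Rplus du"
    and loc: "\<And>x. x \<ge> 0 \<Longrightarrow> set_integrable lborel {0..x} du \<and> u x = (LINT t:{0..x}|lborel. du t)"
    using assms(3) unfolding H10_Rplus_def by auto
  have wP: "w \<in> Phat \<beta> N" and w0: "w 0 = 0" using assms(4) unfolding P0hat_def by auto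
  from wP obtain qw where qw: "degree qw \<le> N" "w = ef \<beta> qw" unfolding Phat_ef by blast
  have "hproj \<beta> (N-1) du \<in> Phat \<beta> (N-1)" by (rule hproj_in[OF b Ldu])
  then obtain pd where pd: "degree pd \<le> N - 1" "hproj \<beta> (N-1) du = ef \<beta> pd"
    unfolding Phat_ef by blast
  have "hproj \<beta> (N-1) u \<in> Phat \<beta> (N-1)" by (rule hproj_in[OF b Lu])
  then obtain pu where pu: "degree pu \<le> N - 1" "hproj \<beta> (N-1) u = ef \<beta> pu"
    unfolding Phat_ef by blast
  define p where "p = pd + smult (\<beta>/2) pu"
  have degp: "degree p \<le> N - 1" unfolding p_def
    by (rule Polynomial.degree_add_le[OF pd(1) order_trans[OF degree_smult_le pu(1)]])
  obtain q where q: "pderiv q = p" "poly q 0 = 0" "degree q \<le> Suc (degree p)"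
    using antideriv_poly by blast
  have degq: "degree q \<le> N" using q(3) degp assms(2) by linarith
  define phi where "phi = ef \<beta> q"
  define dphi where "dphi = ef \<beta> (p - smult (\<beta>/2) q)"
  have phi_der: "\<And>x. (phi has_real_derivative dphi x) (at x)"
    unfolding phi_def dphi_def using ef_deriv[of \<beta> q] q(1) by simp
  define dw where "dw = ef \<beta> (pderiv qw - smult (\<beta>/2) qw)"
  have dw: "deriv w = dw" unfolding dw_def qw(2) by (rule deriv_ef)
  define dn where "dn = (\<lambda>x. w x - phi x)"
  have dn_ef: "dn = ef \<beta> (qw - q)" unfolding dn_def qw(2) phi_def by (simp add: fun_eq_iff ef_diff)
  have dnP: "dn \<in> P0hat \<beta> N"
  proof -
    have "degree (qw - q) \<le> N" by (rule degree_diff_le[OF qw(1) degq])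
    moreover have "dn 0 = 0" using w0 q(2) unfolding dn_def phi_def ef_0 by simp
    ultimately show ?thesis unfolding P0hat_def Phat_ef dn_ef mem_Collect_eq
      by (intro conjI exI[of _ "qw - q"]) simp_all
  qed
  define dD where "dD = (\<lambda>x. dw x - dphi x)"
  have ddn: "deriv dn = dD"
  proof -
    have "pderiv (qw - q) - smult (\<beta>/2) (qw - q) = (pderiv qw - smult (\<beta>/2) qw) - (p - smult (\<beta>/2) q)"
      by (simp add: pderiv_diff q(1) smult_diff_right)
    then show ?thesis unfolding dn_ef deriv_ef dD_def dw_def dphi_def
      by (simp add: fun_eq_iff ef_diff)
  qed
  define e where "e = (\<lambda>x. u x - w x)"
  define eD where "eD = (\<lambda>x. du x - dw x)"
  define c where "c = \<beta>^2 / 4"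
  have hyp: "l2inner eD dD + c * l2inner e dn = 0"
    using bspec[OF assms(5) dnP] unfolding dw ddn eD_def e_def c_def by simp
  have Lw: "L2_Rplus w" unfolding qw(2) by (rule ef_L2[OF b])
  have Ldw: "L2_Rplus dw" unfolding dw_def by (rule ef_L2[OF b])
  have Lphi: "L2_Rplus phi" unfolding phi_def by (rule ef_L2[OF b])
  have Ldphi: "L2_Rplus dphi" unfolding dphi_def by (rule ef_L2[OF b])
  have Le: "L2_Rplus e" unfolding e_def by (rule L2_diff[OF Lu Lw])
  have LeD: "L2_Rplus eD" unfolding eD_def by (rule L2_diff[OF Ldu Ldw])
  have Ldn: "L2_Rplus dn" unfolding dn_def by (rule L2_diff[OF Lw Lphi])
  have LdD: "L2_Rplus dD" unfolding dD_def by (rule L2_diff[OF Ldw Ldphi])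
  define v where "v = (\<lambda>x. u x - phi x)"
  define vD where "vD = (\<lambda>x. du x - dphi x)"
  have Lv: "L2_Rplus v" unfolding v_def by (rule L2_diff[OF Lu Lphi])
  have LvD: "L2_Rplus vD" unfolding vD_def by (rule L2_diff[OF Ldu Ldphi])
  have v_eq: "v = (\<lambda>x. e x + dn x)" unfolding v_def e_def dn_def by (simp add: fun_eq_iff)
  have vD_eq: "vD = (\<lambda>x. eD x + dD x)" unfolding vD_def eD_def dD_def by (simp add: fun_eq_iff)
  \<comment> \<open>Galerkin orthogonality\<close>
  have aE: "l2inner eD eD + c * l2inner e e \<le> l2inner vD vD + c * l2inner v v"
  proof -
    have "l2inner vD vD + c * l2inner v v =
      (l2inner eD eD + c * l2inner e e) + 2 * (l2inner eD dD + c * l2inner e dn) + (l2inner dD dD + c * l2inner dn dn)"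
      unfolding v_eq vD_eq l2inner_sq_add[OF LeD LdD] l2inner_sq_add[OF Le Ldn] by (simp add: algebra_simps)
    moreover have "0 \<le> l2inner dD dD + c * l2inner dn dn"
      using l2inner_self_nonneg[of dD] l2inner_self_nonneg[of dn] unfolding c_def by simp
    ultimately show ?thesis using hyp by simp
  qed
  \<comment> \<open>positivity of the boundary term\<close>
  have pos: "0 \<le> l2inner vD v"
  proof -
    have "0 \<le> (LINT x:{0..}|lborel. v x * vD x)"
    proof (rule nonneg_key)
      fix x :: real assume x: "x \<ge> 0"
      have i1: "set_integrable lborel {0..x} du" using loc[OF x] by simp
      have i2: "set_integrable lborel {0..x} dphi"
        unfolding dphi_def by (rule borel_integrable_atLeastAtMost'[OF ef_cont])
      show "set_integrable lborel {0..x} vD \<and> v x = (LINT t:{0..x}|lborel. vD t)"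
      proof
        show "set_integrable lborel {0..x} vD" unfolding vD_def by (rule set_integral_diff(1)[OF i1 i2])
        have "(LINT t:{0..x}|lborel. vD t) = (LINT t:{0..x}|lborel. du t) - (LINT t:{0..x}|lborel. dphi t)"
          unfolding vD_def by (rule set_integral_diff(2)[OF i1 i2])
        also have "(LINT t:{0..x}|lborel. dphi t) = phi x - phi 0"
          unfolding set_lebesgue_integral_def
        proof (rule integral_FTC_atLeastAtMost[OF x])
          show "(phi has_vector_derivative dphi t) (at t within {0..x})" for t
            using phi_der[of t] by (simp add: has_real_derivative_iff_has_vector_derivative[symmetric] has_field_derivative_at_within)
          show "continuous_on {0..x} dphi" unfolding dphi_def by (rule ef_cont)
        qed
        also have "phi 0 = 0" unfolding phi_def ef_0 q(2) ..
        finally show "v x = (LINT t:{0..x}|lborel. vD t)" using loc[OF x] unfolding v_def by simp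
      qed
    next
      show "set_integrable lborel {0..} (\<lambda>x. v x * vD x)" by (rule L2_mult_int[OF Lv LvD])
    qed
    then show ?thesis unfolding l2inner_def by (simp add: mult.commute)
  qed
  define al where "al = (\<lambda>x. du x - hproj \<beta> (N - 1) du x)"
  define ga where "ga = (\<lambda>x. u x - hproj \<beta> (N - 1) u x)"
  have Lal: "L2_Rplus al" unfolding al_def using hproj_in[OF b Ldu] Phat_L2[OF b] by (intro L2_diff Ldu) auto
  have Lga: "L2_Rplus ga" unfolding ga_def using hproj_in[OF b Lu] Phat_L2[OF b] by (intro L2_diff Lu) auto
  have h1: "dphi x + \<beta>/2 * phi x = ef \<beta> pd x + \<beta>/2 * ef \<beta> pu x" for x
    unfolding dphi_def phi_def p_def by (simp add: ef_smult ef_add)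
  have r_eq: "(\<lambda>x. 1 * vD x + (\<beta>/2) * v x) = (\<lambda>x. 1 * al x + (\<beta>/2) * ga x)"
  proof
    fix x
    have "1 * vD x + (\<beta>/2) * v x = du x + \<beta>/2 * u x - (dphi x + \<beta>/2 * phi x)"
      unfolding vD_def v_def right_diff_distrib mult_1 by linarith
    also have "\<dots> = du x + \<beta>/2 * u x - (ef \<beta> pd x + \<beta>/2 * ef \<beta> pu x)" by (simp only: h1)
    also have "\<dots> = 1 * al x + (\<beta>/2) * ga x"
      unfolding al_def ga_def pd(2) pu(2) right_diff_distrib mult_1 by linarith
    finally show "1 * vD x + (\<beta>/2) * v x = 1 * al x + (\<beta>/2) * ga x" .
  qed
  have R1: "l2inner vD vD + c * l2inner v v \<le> l2inner (\<lambda>x. 1 * vD x + (\<beta>/2) * v x) (\<lambda>x. 1 * vD x + (\<beta>/2) * v x)"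
    unfolding l2inner_sq_lin[OF LvD Lv] c_def using pos b by (simp add: l2inner_comm[of v vD] power_divide)
  have CS: "l2inner al ga \<le> l2norm al * l2norm ga"
    unfolding l2norm_inner
  proof (rule cs_real)
    fix s t :: real
    have "0 \<le> l2inner (\<lambda>x. s * al x + (-t) * ga x) (\<lambda>x. s * al x + (-t) * ga x)"
      by (rule l2inner_self_nonneg)
    then show "2 * s * t * l2inner al ga \<le> s^2 * l2inner al al + t^2 * l2inner ga ga"
      unfolding l2inner_sq_lin[OF Lal Lga] by simp
  qed (rule l2inner_self_nonneg)+
  have R2: "l2inner (\<lambda>x. 1 * al x + (\<beta>/2) * ga x) (\<lambda>x. 1 * al x + (\<beta>/2) * ga x)
      \<le> (l2norm al + \<beta>/2 * l2norm ga)^2"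
  proof -
    have "l2inner (\<lambda>x. 1 * al x + (\<beta>/2) * ga x) (\<lambda>x. 1 * al x + (\<beta>/2) * ga x)
       = l2inner al al + \<beta> * l2inner al ga + (\<beta>/2)^2 * l2inner ga ga"
      unfolding l2inner_sq_lin[OF Lal Lga] by simp
    also have "\<dots> \<le> (l2norm al)^2 + \<beta> * (l2norm al * l2norm ga) + (\<beta>/2)^2 * (l2norm ga)^2"
      using CS b unfolding l2norm_sq by (intro add_mono mult_left_mono) auto
    also have "\<dots> = (l2norm al + \<beta>/2 * l2norm ga)^2" by (simp add: power2_eq_square algebra_simps)
    finally show ?thesis .
  qed
  have main: "l2inner eD eD + \<beta>^2 / 4 * l2inner e e \<le> (l2norm al + \<beta>/2 * l2norm ga)^2"
    using aE R1 R2 unfolding r_eq c_def by linarith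
  have "h1norm e eD = sqrt (l2inner e e + l2inner eD eD)"
    unfolding h1norm_def l2norm_sq ..
  also have "\<dots> \<le> (2 + 2 / \<beta>) * l2norm al + (\<beta> + 1) * l2norm ga"
    by (rule final_real[OF b l2inner_self_nonneg l2inner_self_nonneg _ _ main])
       (simp_all add: l2norm_inner l2inner_self_nonneg)
  finally show ?thesis unfolding e_def eD_def al_def ga_def dw .
qed

end
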